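(* Let $c_1,\dots,c_k\in(0,\infty)$ be fixed constants. With probability one, there exists a tuning parameter $\lambda\in(0,\infty)^k$ such that $$\frac{\lambda}{2g'(\|Y-X\hat\beta^\lambda\|_2^2)}=\Big(c_1\|(XP_1M_1^{+})^\top\varepsilon\|_{q_1}^*,\dots,c_k\|(XP_kM_k^{+})^\top\varepsilon\|_{q_k}^*\Big)^\top.$$
   Context: Standing setup. Model: $Y=X\beta^*+\varepsilon$ with $Y\in\mathbb{R}^n$, $X\in\mathbb{R}^{n\times p}$, $\beta^*\in\mathbb{R}^p$, $\varepsilon\in\mathbb{R}^n$ (random; no distributional assumptions beyond those below). Link function $g:\mathbb{R}\to[0,\infty)$ with $g(0)=0$, $g$ continuous and strictly increasing on $[0,\infty)$, continuously differentiable on $(0,\infty)$ with strictly positive and non-increasing derivative $g'$, and such that $\alpha\mapsto g(\|\alpha\|_2^2)$ is strictly convex on $\mathbb{R}^n$. Penalty: $k\ge1$, matrices $M_1,\dots,M_k\in\mathbb{R}^{p\times p}$ with $\bigcap_{j=1}^k\mathrm{Ker}(M_j)=\{0\}$, exponents $q_j\ge1$, $\|\cdot\|_{q_j}$ the $\ell_{q_j}$-norm on $\mathbb{R}^p$, and $\|\cdot\|_{q_j}^*$ its dual norm. For $\lambda\in(0,\infty)^k$, $\hat\beta^\lambda$ denotes any element of $\arg\min_{\beta\in\mathbb{R}^p}\{g(\|Y-X\beta\|_2^2)+\sum_{j=1}^k\lambda_j\|M_j\beta\|_{q_j}\}$ (the quantity $\|Y-X\hat\beta^\lambda\|_2^2$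 does not depend on which minimizer is chosen). $A^+$ denotes the Moore–Penrose pseudoinverse; $P_1,\dots,P_k\in\mathbb{R}^{p\times p}$ are fixed projection matrices with $\sum_{j=1}^kP_jM_j^+M_j=I_{p\times p}$. Noise assumption: with probability one, $Y\neq0$ and $\min_{j}\|(XP_jM_j^{+})^\top\varepsilon\|_{q_j}^*>0$. *)

theory Defs
  imports "HOL-Analysis.Analysis" "HOL-Probability.Probability"
begin

definition strictly_convex :: "('a::real_vector \<Rightarrow> real) \<Rightarrow> bool" where
  "strictly_convex f \<longleftrightarrow>
     (\<forall>x y t. x \<noteq> y \<longrightarrow> 0 < t \<longrightarrow> t < 1 \<longrightarrow>
        f ((1 - t) *\<^sub>R x + t *\<^sub>R y) < (1 - t) * f x + t * f y)"

definition lq_norm :: "real \<Rightarrow> real^'p \<Rightarrow> real" where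
  "lq_norm q v = (\<Sum>i\<in>UNIV. \<bar>v $ i\<bar> powr q) powr (1 / q)"

definition lq_dual_norm :: "real \<Rightarrow> real^'p \<Rightarrow> real" where
  "lq_dual_norm q u = Sup {u \<bullet> v | v. lq_norm q v \<le> 1}"

definition pinv :: "real^'n^'m \<Rightarrow> real^'m^'n" where
  "pinv A = (THE B. A ** B ** A = A \<and> B ** A ** B = B \<and>
                    transpose (A ** B) = A ** B \<and> transpose (B ** A) = B ** A)"

definition kernel :: "real^'n^'m \<Rightarrow> (real^'n) set" where
  "kernel A = {x. A *v x = 0}"

definition objective ::
  "(real \<Rightarrow> real) \<Rightarrow> real^'p^'n \<Rightarrow> real^'n \<Rightarrow> ('k::finite \<Rightarrow> real^'p^'p)
   \<Rightarrow> ('k \<Rightarrow> real) \<Rightarrow> ('k \<Rightarrow> real) \<Rightarrow> real^'p \<Rightarrow> real" where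
  "objective g X Y M q lam \<beta> =
     g ((norm (Y - X *v \<beta>))\<^sup>2) + (\<Sum>j\<in>UNIV. lam j * lq_norm (q j) (M j *v \<beta>))"

definition estimators ::
  "(real \<Rightarrow> real) \<Rightarrow> real^'p^'n \<Rightarrow> real^'n \<Rightarrow> ('k::finite \<Rightarrow> real^'p^'p)
   \<Rightarrow> ('k \<Rightarrow> real) \<Rightarrow> ('k \<Rightarrow> real) \<Rightarrow> (real^'p) set" where
  "estimators g X Y M q lam =
     {\<beta>. \<forall>\<beta>'. objective g X Y M q lam \<beta> \<le> objective g X Y M q lam \<beta>'}"

end

theory Submission
  imports Defs
begin


lemma lq_nonneg: "0 \<le> lq_norm q v"
  unfolding lq_norm_def by simp

lemma lq_comp_le:
  assumes q: "1 \<le> q" shows "\<bar>v $ i\<bar> \<le> lq_norm q v"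
proof -
  have "\<bar>v $ i\<bar> powr q \<le> (\<Sum>i\<in>UNIV. \<bar>v $ i\<bar> powr q)"
    by (rule member_le_sum) auto
  hence "(\<bar>v $ i\<bar> powr q) powr (1/q) \<le> (\<Sum>i\<in>UNIV. \<bar>v $ i\<bar> powr q) powr (1/q)"
    using q by (intro powr_mono2) auto
  moreover have "(\<bar>v $ i\<bar> powr q) powr (1/q) = \<bar>v $ i\<bar>"
    using q by (simp add: powr_powr)
  ultimately show ?thesis unfolding lq_norm_def by simp
qed

lemma lq_zero: assumes "1 \<le> q" "lq_norm q v = 0" shows "v = 0"
  using lq_comp_le[OF assms(1), of v] assms(2) by (simp add: vec_eq_iff)

lemma lq_scale:
  assumes q: "1 \<le> q" shows "lq_norm q (a *\<^sub>R v) = \<bar>a\<bar> * lq_norm q v"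
proof -
  have "(\<Sum>i\<in>UNIV. \<bar>(a *\<^sub>R v) $ i\<bar> powr q) = \<bar>a\<bar> powr q * (\<Sum>i\<in>UNIV. \<bar>v $ i\<bar> powr q)"
    by (simp add: abs_mult powr_mult sum_distrib_left)
  hence "lq_norm q (a *\<^sub>R v) = (\<bar>a\<bar> powr q) powr (1/q) * (\<Sum>i\<in>UNIV. \<bar>v $ i\<bar> powr q) powr (1/q)"
    unfolding lq_norm_def by (simp add: powr_mult sum_nonneg)
  also have "(\<bar>a\<bar> powr q) powr (1/q) = \<bar>a\<bar>" using q by (simp add: powr_powr)
  finally show ?thesis unfolding lq_norm_def .
qed

lemma lq_cont: assumes q: "1 \<le> q" shows "continuous_on UNIV (lq_norm q :: real^'p \<Rightarrow> real)"
proof -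
  have c1: "continuous_on UNIV (\<lambda>v::real^'p. \<Sum>i\<in>UNIV. \<bar>v $ i\<bar> powr q)"
    by (intro continuous_intros continuous_on_powr') (use q in \<open>auto intro!: continuous_intros\<close>)
  show ?thesis unfolding lq_norm_def
    by (intro continuous_on_powr'[OF c1]) (use q in \<open>auto intro!: continuous_intros sum_nonneg\<close>)
qed

lemma powr_convex0:
  fixes a b t q :: real
  assumes q: "1 \<le> q" and a: "0 \<le> a" and b: "0 \<le> b" and t: "0 \<le> t" "t \<le> 1"
  shows "((1-t)*a + t*b) powr q \<le> (1-t) * a powr q + t * b powr q"
proof -
  have tq: "\<And>s::real. 0 \<le> s \<Longrightarrow> s \<le> 1 \<Longrightarrow> s powr q \<le> s"
    using q by (metis powr_mono' powr_one_gt_zero_iff powr_one_eq_one powr_one' order.refl) 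
  show ?thesis
  proof (cases "a = 0")
    case True
    have "(t*b) powr q = t powr q * b powr q" using t b by (simp add: powr_mult)
    also have "\<dots> \<le> t * b powr q" using tq[OF t] by (intro mult_right_mono) auto
    finally show ?thesis using True q by simp
  next
    case a0: False
    show ?thesis
    proof (cases "b = 0")
      case True
      have "((1-t)*a) powr q = (1-t) powr q * a powr q" using t a by (simp add: powr_mult)
      also have "\<dots> \<le> (1-t) * a powr q" using tq[of "1-t"] t by (intro mult_right_mono) auto
      finally show ?thesis using True q by simp
    next
      case False
      then show ?thesis using convex_onD[OF powr_convex[OF q], of t a b] a b a0 t by simp
    qed
  qed
qed

lemma lq_pow: assumes q: "1 \<le> q" shows "lq_norm q v powr q = (\<Sum>i\<in>UNIV. \<bar>v $ i\<bar> powr q)"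
  unfolding lq_norm_def using q by (simp add: powr_powr sum_nonneg)

lemma lq_triangle:
  assumes q: "1 \<le> q" shows "lq_norm q (u + v) \<le> lq_norm q u + lq_norm q v"
proof (cases "lq_norm q u = 0 \<or> lq_norm q v = 0")
  case True
  then show ?thesis
  proof
    assume "lq_norm q u = 0" then have "u = 0" using lq_zero[OF q] by blast
    then show ?thesis by (simp add: lq_nonneg)
  next
    assume "lq_norm q v = 0" then have "v = 0" using lq_zero[OF q] by blast
    then show ?thesis by (simp add: lq_nonneg)
  qed
next
  case False
  define a where "a = lq_norm q u"
  define b where "b = lq_norm q v"
  have a: "a > 0" and b: "b > 0" using False lq_nonneg[of q u] lq_nonneg[of q v]
    unfolding a_def b_def by linarith+
  define t where "t = b / (a + b)"
  have t: "0 \<le> t" "t \<le> 1" "1 - t = a / (a+b)" using a b by (auto simp: t_def field_simps)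
  define w where "w = (1 / (a+b)) *\<^sub>R (u + v)"
  have "\<bar>w $ i\<bar> powr q \<le> (1-t) * (\<bar>u $ i\<bar> powr q / a powr q) + t * (\<bar>v $ i\<bar> powr q / b powr q)" for i
  proof -
    have "\<bar>w $ i\<bar> \<le> (1-t) * (\<bar>u $ i\<bar> / a) + t * (\<bar>v $ i\<bar> / b)"
    proof -
      have e1: "(1-t) * (\<bar>u $ i\<bar> / a) = \<bar>u $ i\<bar> / (a+b)" using t(3) a by simp
      have e2: "t * (\<bar>v $ i\<bar> / b) = \<bar>v $ i\<bar> / (a+b)" using a b by (simp add: t_def)
      have "\<bar>w $ i\<bar> = \<bar>u $ i + v $ i\<bar> / (a+b)" using a b by (simp add: w_def abs_mult)
      also have "\<dots> \<le> (\<bar>u $ i\<bar> + \<bar>v $ i\<bar>) / (a+b)" using a b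
        by (intro divide_right_mono abs_triangle_ineq) auto
      finally show ?thesis unfolding e1 e2 by (simp add: add_divide_distrib)
    qed
    hence "\<bar>w $ i\<bar> powr q \<le> ((1-t) * (\<bar>u $ i\<bar> / a) + t * (\<bar>v $ i\<bar> / b)) powr q"
      using q by (intro powr_mono2) auto
    also have "\<dots> \<le> (1-t) * (\<bar>u $ i\<bar> / a) powr q + t * (\<bar>v $ i\<bar> / b) powr q"
      using a b t q by (intro powr_convex0) auto
    finally show ?thesis using a b by (simp add: powr_divide)
  qed
  hence "(\<Sum>i\<in>UNIV. \<bar>w $ i\<bar> powr q) \<le> (\<Sum>i\<in>UNIV. (1-t) * (\<bar>u $ i\<bar> powr q / a powr q) + t * (\<bar>v $ i\<bar> powr q / b powr q))"
    by (rule sum_mono)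
  also have "\<dots> = (1-t) * ((\<Sum>i\<in>UNIV. \<bar>u $ i\<bar> powr q) / a powr q) + t * ((\<Sum>i\<in>UNIV. \<bar>v $ i\<bar> powr q) / b powr q)"
    by (simp add: sum.distrib sum_distrib_left sum_divide_distrib)
  also have "\<dots> = 1"
  proof -
    have "(\<Sum>i\<in>UNIV. \<bar>u $ i\<bar> powr q) = a powr q" "(\<Sum>i\<in>UNIV. \<bar>v $ i\<bar> powr q) = b powr q"
      using lq_pow[OF q, of u] lq_pow[OF q, of v] unfolding a_def b_def by simp_all
    moreover have "a powr q > 0" "b powr q > 0" using a b by auto
    ultimately show ?thesis using t by simp
  qed
  finally have "lq_norm q w \<le> 1" unfolding lq_norm_def by (intro powr_le1) (use q in \<open>auto simp: sum_nonneg\<close>)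
  moreover have "lq_norm q w = lq_norm q (u+v) / (a+b)" unfolding w_def lq_scale[OF q] using a b by simp
  ultimately show ?thesis using a b unfolding a_def b_def by (simp add: field_simps)
qed

lemma small_t:
  fixes A B :: real
  assumes "\<And>t. 0 < t \<Longrightarrow> t < 1 \<Longrightarrow> A \<le> t * B"
  shows "A \<le> 0"
proof (rule ccontr)
  assume A: "\<not> A \<le> 0"
  define t where "t = min (1/2) (A / (2 * (\<bar>B\<bar> + 1)))"
  have t: "0 < t" "t < 1" using A by (auto simp: t_def)
  have "t * B \<le> t * \<bar>B\<bar>" using t by (simp add: mult_left_mono)
  also have "\<dots> \<le> A / (2 * (\<bar>B\<bar> + 1)) * (\<bar>B\<bar> + 1)" using t
    by (intro mult_mono) (auto simp: t_def)
  also have "\<dots> = A / 2" by (simp add: field_simps)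
  finally show False using assms[OF t] A by linarith
qed

lemma tangent:
  fixes r a :: "real^'n" and g g' :: "real \<Rightarrow> real"
  assumes sc: "strictly_convex (\<lambda>\<alpha>::real^'n. g ((norm \<alpha>)\<^sup>2))"
    and g_deriv: "\<forall>x>0. (g has_real_derivative g' x) (at x)"
    and r: "r \<noteq> 0"
  shows "g ((norm r)\<^sup>2) + 2 * g' ((norm r)\<^sup>2) * (r \<bullet> (a - r)) \<le> g ((norm a)\<^sup>2)"
proof (cases "a = r")
  case True then show ?thesis by simp
next
  case False
  define v where "v = a - r"
  have v: "v \<noteq> 0" using False by (simp add: v_def)
  define \<phi> where "\<phi> t = g ((norm (r + t *\<^sub>R v))\<^sup>2)" for t
  have cvx: "convex_on UNIV \<phi>"
  proof (rule convex_onI)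
    fix t x y :: real assume t: "0 < t" "t < 1"
    show "\<phi> ((1 - t) *\<^sub>R x + t *\<^sub>R y) \<le> (1 - t) * \<phi> x + t * \<phi> y"
    proof (cases "x = y")
      case True then show ?thesis by (simp add: algebra_simps)
    next
      case False
      have ne: "r + x *\<^sub>R v \<noteq> r + y *\<^sub>R v" using False v by simp
      have eq: "r + ((1 - t) *\<^sub>R x + t *\<^sub>R y) *\<^sub>R v = (1 - t) *\<^sub>R (r + x *\<^sub>R v) + t *\<^sub>R (r + y *\<^sub>R v)"
        by (simp add: algebra_simps)
      show ?thesis using sc ne t unfolding strictly_convex_def \<phi>_def eq
        by (meson less_imp_le)
    qed
  qed simp
  define \<psi> where "\<psi> t = (norm r)\<^sup>2 + 2 * t * (r \<bullet> v) + t\<^sup>2 * (norm v)\<^sup>2" for t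
  have psi_eq: "(norm (r + t *\<^sub>R v))\<^sup>2 = \<psi> t" for t
    unfolding \<psi>_def power2_norm_eq_inner
    by (simp add: inner_add_left inner_add_right inner_commute power2_eq_square algebra_simps)
  have dpsi: "(\<psi> has_real_derivative 2 * (r \<bullet> v)) (at 0)"
    unfolding \<psi>_def by (auto intro!: derivative_eq_intros)
  have p0: "\<psi> 0 > 0" using r by (simp add: \<psi>_def)
  have dphi: "(\<phi> has_real_derivative g' (\<psi> 0) * (2 * (r \<bullet> v))) (at 0)"
    unfolding \<phi>_def psi_eq using DERIV_chain2[OF g_deriv[rule_format, OF p0] dpsi] by simp
  have "\<phi> 1 - \<phi> 0 \<ge> g' (\<psi> 0) * (2 * (r \<bullet> v)) * (1 - 0)"
    by (rule convex_on_imp_above_tangent[OF cvx]) (use dphi in auto)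
  moreover have "\<psi> 0 = (norm r)\<^sup>2" by (simp add: \<psi>_def)
  ultimately show ?thesis unfolding \<phi>_def v_def by simp
qed

definition pen :: "('k::finite \<Rightarrow> real) \<Rightarrow> ('k \<Rightarrow> real^'p^'p) \<Rightarrow> ('k \<Rightarrow> real) \<Rightarrow> real^'p \<Rightarrow> real" where
  "pen w M q \<beta> = (\<Sum>j\<in>UNIV. w j * lq_norm (q j) (M j *v \<beta>))"

lemma pen_nonneg: assumes "\<forall>j. 0 \<le> w j" shows "0 \<le> pen w M q \<beta>"
  unfolding pen_def using assms by (intro sum_nonneg mult_nonneg_nonneg lq_nonneg) auto

lemma pen_convex:
  assumes q: "\<forall>j. 1 \<le> q j" and w: "\<forall>j. 0 \<le> w j" and t: "0 \<le> t" "t \<le> 1"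
  shows "pen w M q ((1-t) *\<^sub>R u + t *\<^sub>R v) \<le> (1-t) * pen w M q u + t * pen w M q v"
proof -
  have "w j * lq_norm (q j) (M j *v ((1-t) *\<^sub>R u + t *\<^sub>R v))
        \<le> (1-t) * (w j * lq_norm (q j) (M j *v u)) + t * (w j * lq_norm (q j) (M j *v v))" for j
  proof -
    have "lq_norm (q j) (M j *v ((1-t) *\<^sub>R u + t *\<^sub>R v))
        = lq_norm (q j) ((1-t) *\<^sub>R (M j *v u) + t *\<^sub>R (M j *v v))"
      by (simp add: matrix_vector_right_distrib matrix_vector_mult_scaleR)
    also have "\<dots> \<le> lq_norm (q j) ((1-t) *\<^sub>R (M j *v u)) + lq_norm (q j) (t *\<^sub>R (M j *v v))"
      using q by (intro lq_triangle) auto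
    also have "\<dots> = (1-t) * lq_norm (q j) (M j *v u) + t * lq_norm (q j) (M j *v v)"
      using q t by (simp add: lq_scale)
    finally show ?thesis using w
      by (metis (no_types, opaque_lifting) distrib_left mult.left_commute mult_left_mono)
  qed
  then show ?thesis unfolding pen_def
    by (simp add: sum_distrib_left sum.distrib[symmetric] sum_mono)
qed

lemma pen_coercive:
  fixes M :: "'k::finite \<Rightarrow> real^'p^'p"
  assumes q: "\<forall>j. 1 \<le> q j" and w: "\<forall>j. 0 < w j" and kernels: "(\<Inter>j. kernel (M j)) = {0}"
  shows "\<exists>\<kappa>>0. \<forall>\<beta>. \<kappa> * norm \<beta> \<le> pen w M q \<beta>"
proof -
  define f where "f \<beta> = (\<chi> j. M j *v \<beta>)" for \<beta> :: "real^'p"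
  have lin: "linear f" unfolding f_def
    by (rule linearI) (simp_all add: vec_eq_iff matrix_vector_right_distrib matrix_vector_mult_scaleR)
  have bl: "bounded_linear f" using lin by (simp add: linear_conv_bounded_linear)
  have inj: "\<forall>x\<in>UNIV. f x = 0 \<longrightarrow> x = 0"
  proof (intro ballI impI)
    fix x assume "f x = 0"
    then have "\<forall>j. M j *v x = 0" by (simp add: f_def vec_eq_iff)
    then have "x \<in> (\<Inter>j. kernel (M j))" by (simp add: kernel_def)
    then show "x = 0" using kernels by simp
  qed
  obtain e where e: "e > 0" "\<forall>x\<in>UNIV. e * norm x \<le> norm (f x)"
    using injective_imp_isometric[OF closed_UNIV subspace_UNIV bl inj] by blast
  define wm where "wm = Min (range w)"
  have wm: "wm > 0" "\<forall>j. wm \<le> w j" using w by (auto simp: wm_def)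
  define C where "C = real CARD('p)"
  have C: "C > 0" by (simp add: C_def)
  have nb: "norm x \<le> C * lq_norm qq x" if "1 \<le> qq" for x :: "real^'p" and qq
  proof -
    have "norm x \<le> (\<Sum>i\<in>UNIV. \<bar>x $ i\<bar>)" by (rule norm_le_l1_cart)
    also have "\<dots> \<le> (\<Sum>i\<in>(UNIV::'p set). lq_norm qq x)" by (intro sum_mono lq_comp_le that)
    also have "\<dots> = C * lq_norm qq x" by (simp add: C_def)
    finally show ?thesis .
  qed
  have "e / C * wm * norm \<beta> \<le> pen w M q \<beta>" for \<beta>
  proof -
    have "e * norm \<beta> \<le> norm (f \<beta>)" using e by auto
    also have "\<dots> \<le> (\<Sum>j\<in>UNIV. norm (f \<beta> $ j))" unfolding norm_vec_def by (rule L2_set_le_sum) auto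
    also have "\<dots> \<le> (\<Sum>j\<in>UNIV. C * lq_norm (q j) (M j *v \<beta>))"
      by (intro sum_mono) (simp add: f_def nb q)
    finally have 1: "e * norm \<beta> \<le> C * (\<Sum>j\<in>UNIV. lq_norm (q j) (M j *v \<beta>))" by (simp add: sum_distrib_left)
    have 2: "wm * (\<Sum>j\<in>UNIV. lq_norm (q j) (M j *v \<beta>)) \<le> pen w M q \<beta>"
      unfolding pen_def sum_distrib_left using wm by (intro sum_mono mult_right_mono lq_nonneg) auto
    have "e / C * wm * norm \<beta> = wm / C * (e * norm \<beta>)" by simp
    also have "\<dots> \<le> wm / C * (C * (\<Sum>j\<in>UNIV. lq_norm (q j) (M j *v \<beta>)))"
      using 1 wm C by (intro mult_left_mono) auto
    also have "\<dots> = wm * (\<Sum>j\<in>UNIV. lq_norm (q j) (M j *v \<beta>))" using C by simp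
    finally show ?thesis using 2 by linarith
  qed
  moreover have "e / C * wm > 0" using e C wm by auto
  ultimately show ?thesis by blast
qed

lemma pen_cont: assumes q: "\<forall>j. 1 \<le> q j" shows "continuous_on UNIV (pen w M q)"
  unfolding pen_def
proof (intro continuous_intros)
  fix j
  have "continuous_on UNIV (lq_norm (q j) \<circ> (\<lambda>\<beta>. M j *v \<beta>))"
    by (intro continuous_on_compose continuous_on_subset[OF lq_cont[OF q[rule_format]]])
       (simp_all add: linear_continuous_on linear_conv_bounded_linear)
  then show "continuous_on UNIV (\<lambda>x. lq_norm (q j) (M j *v x))" by (simp add: o_def)
qed

lemma objective_pen: "objective g X Y M q (\<lambda>j. s * w j) \<beta> = g ((norm (Y - X *v \<beta>))\<^sup>2) + s * pen w M q \<beta>"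
  unfolding objective_def pen_def by (simp add: sum_distrib_left mult.assoc)

lemma lq_zero_vec: "lq_norm q 0 = 0"
  unfolding lq_norm_def by simp

lemma pen_zero: "pen w M q 0 = 0"
  unfolding pen_def by (simp add: lq_zero_vec)

lemma core:
  fixes X :: "real^'p^'n" and Y :: "real^'n" and M :: "'k::finite \<Rightarrow> real^'p^'p"
    and q w :: "'k \<Rightarrow> real" and g g' :: "real \<Rightarrow> real"
  assumes q: "\<forall>j. 1 \<le> q j" and w: "\<forall>j. 0 < w j"
    and kernels: "(\<Inter>j. kernel (M j)) = {0}"
    and Y: "Y \<noteq> 0"
    and g_deriv: "\<forall>x>0. (g has_real_derivative g' x) (at x)"
    and g'_pos: "\<forall>x>0. 0 < g' x"
    and sc: "strictly_convex (\<lambda>\<alpha>::real^'n. g ((norm \<alpha>)\<^sup>2))"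
  shows "\<exists>s>0. \<forall>\<beta>\<in>estimators g X Y M q (\<lambda>j. s * w j). g' ((norm (Y - X *v \<beta>))\<^sup>2) = s"
proof -
  define P where "P = pen w M q"
  have w0: "\<forall>j. 0 \<le> w j" using w less_imp_le by blast
  have Pnn: "\<And>\<beta>. 0 \<le> P \<beta>" unfolding P_def using pen_nonneg[OF w0] by blast
  have Pcv: "\<And>t u v. 0 \<le> t \<Longrightarrow> t \<le> 1 \<Longrightarrow> P ((1-t) *\<^sub>R u + t *\<^sub>R v) \<le> (1-t) * P u + t * P v"
    unfolding P_def using pen_convex[OF q w0] by blast
  obtain \<kappa> where \<kappa>: "\<kappa> > 0" "\<And>\<beta>. \<kappa> * norm \<beta> \<le> P \<beta>"
    using pen_coercive[OF q w kernels] unfolding P_def by blast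
  define F where "F \<beta> = (norm (Y - X *v \<beta>))\<^sup>2 + P \<beta>" for \<beta>
  define \<rho> where "\<rho> = (norm Y)\<^sup>2 / \<kappa>"
  have \<rho>: "0 \<le> \<rho>" using \<kappa> by (simp add: \<rho>_def)
  have cX: "continuous_on UNIV (\<lambda>\<beta>::real^'p. X *v \<beta>)"
    by (simp add: linear_continuous_on linear_conv_bounded_linear)
  have cP: "continuous_on (cball 0 \<rho>) P"
    unfolding P_def by (rule continuous_on_subset[OF pen_cont[OF q]]) simp
  have cF: "continuous_on (cball 0 \<rho>) F" unfolding F_def
    by (intro continuous_intros continuous_on_subset[OF cX] cP) auto
  obtain b0 where b0K: "b0 \<in> cball 0 \<rho>" and b0min': "\<forall>y\<in>cball 0 \<rho>. F b0 \<le> F y"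
    using continuous_attains_inf[OF compact_cball _ cF] \<rho> by auto
  have b0min: "F b0 \<le> F \<beta>" for \<beta>
  proof (cases "\<beta> \<in> cball 0 \<rho>")
    case True then show ?thesis using b0min' by blast
  next
    case False
    then have "norm \<beta> > \<rho>" by simp
    then have "\<kappa> * \<rho> < \<kappa> * norm \<beta>" using \<kappa> by simp
    also have "\<dots> \<le> F \<beta>" using \<kappa>(2)[of \<beta>] by (simp add: F_def add_increasing)
    finally have "(norm Y)\<^sup>2 < F \<beta>" using \<kappa> by (simp add: \<rho>_def)
    moreover have "F b0 \<le> F 0" using b0min' \<rho> by simp
    moreover have "F 0 = (norm Y)\<^sup>2" by (simp add: F_def P_def pen_zero)
    ultimately show ?thesis by linarith
  qed
  define r where "r = Y - X *v b0"
  have r0: "r \<noteq> 0"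
  proof
    assume "r = 0"
    then have XY: "X *v b0 = Y" by (simp add: r_def)
    have "P b0 \<le> t * (norm Y)\<^sup>2" if t: "0 < t" "t < 1" for t
    proof -
      have res: "Y - X *v ((1-t) *\<^sub>R b0 + t *\<^sub>R 0) = t *\<^sub>R Y"
        using XY by (simp add: matrix_vector_mult_scaleR algebra_simps)
      have "F b0 \<le> F ((1-t) *\<^sub>R b0 + t *\<^sub>R 0)" by (rule b0min)
      also have "\<dots> \<le> t\<^sup>2 * (norm Y)\<^sup>2 + (1-t) * P b0"
        using Pcv[of t b0 0] t unfolding F_def res by (simp add: P_def pen_zero power_mult_distrib)
      finally have "P b0 \<le> t\<^sup>2 * (norm Y)\<^sup>2 + (1-t) * P b0" by (simp add: F_def XY)
      then have "t * P b0 \<le> t * (t * (norm Y)\<^sup>2)" by (simp add: algebra_simps power2_eq_square)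
      then show ?thesis using t by simp
    qed
    then have "P b0 \<le> 0" by (intro small_t) auto
    then have "\<kappa> * norm b0 \<le> 0" using \<kappa>(2)[of b0] by linarith
    then have "b0 = 0" using \<kappa> by (simp add: mult_le_0_iff)
    then show False using XY Y by simp
  qed
  have lin: "2 * (r \<bullet> (X *v (\<beta> - b0))) \<le> P \<beta> - P b0" for \<beta>
  proof -
    define d where "d = X *v (\<beta> - b0)"
    have "2 * (r \<bullet> d) - (P \<beta> - P b0) \<le> t * (norm d)\<^sup>2" if t: "0 < t" "t < 1" for t
    proof -
      have res: "Y - X *v ((1-t) *\<^sub>R b0 + t *\<^sub>R \<beta>) = r - t *\<^sub>R d"
        by (simp add: r_def d_def matrix_vector_mult_scaleR matrix_vector_right_distrib
            matrix_vector_mult_diff_distrib algebra_simps)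
      have nrm: "(norm (r - t *\<^sub>R d))\<^sup>2 = (norm r)\<^sup>2 - 2 * t * (r \<bullet> d) + t\<^sup>2 * (norm d)\<^sup>2"
        unfolding power2_norm_eq_inner
        by (simp add: inner_diff_left inner_diff_right inner_commute power2_eq_square algebra_simps)
      have "F b0 \<le> F ((1-t) *\<^sub>R b0 + t *\<^sub>R \<beta>)" by (rule b0min)
      also have "\<dots> \<le> (norm r)\<^sup>2 - 2 * t * (r \<bullet> d) + t\<^sup>2 * (norm d)\<^sup>2 + ((1-t) * P b0 + t * P \<beta>)"
        using Pcv[of t b0 \<beta>] t unfolding F_def res nrm by simp
      finally have "t * (2 * (r \<bullet> d) - (P \<beta> - P b0)) \<le> t * (t * (norm d)\<^sup>2)"
        by (simp add: F_def r_def[symmetric] algebra_simps power2_eq_square)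
      then show ?thesis using t by simp
    qed
    then have "2 * (r \<bullet> d) - (P \<beta> - P b0) \<le> 0" by (intro small_t) auto
    then show ?thesis by (simp add: d_def)
  qed
  define s where "s = g' ((norm r)\<^sup>2)"
  have s: "s > 0" using g'_pos r0 by (simp add: s_def)
  define obj where "obj = objective g X Y M q (\<lambda>j. s * w j)"
  have obj: "obj \<beta> = g ((norm (Y - X *v \<beta>))\<^sup>2) + s * P \<beta>" for \<beta>
    unfolding obj_def P_def by (rule objective_pen)
  have b0opt: "obj b0 \<le> obj \<beta>" for \<beta>
  proof -
    have "g ((norm r)\<^sup>2) + 2 * s * (r \<bullet> ((Y - X *v \<beta>) - r)) \<le> g ((norm (Y - X *v \<beta>))\<^sup>2)"
      unfolding s_def by (rule tangent[OF sc g_deriv r0])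
    moreover have "(Y - X *v \<beta>) - r = - (X *v (\<beta> - b0))"
      by (simp add: r_def matrix_vector_mult_diff_distrib)
    moreover have "s * (2 * (r \<bullet> (X *v (\<beta> - b0)))) \<le> s * (P \<beta> - P b0)"
      using lin[of \<beta>] s by (intro mult_left_mono) auto
    ultimately show ?thesis unfolding obj r_def[symmetric] by (simp add: algebra_simps)
  qed
  have "g' ((norm (Y - X *v \<beta>))\<^sup>2) = s" if \<beta>: "\<beta> \<in> estimators g X Y M q (\<lambda>j. s * w j)" for \<beta>
  proof -
    have bopt: "obj \<beta> \<le> obj b0" using \<beta> unfolding estimators_def obj_def by blast
    have "Y - X *v \<beta> = r"
    proof (rule ccontr)
      assume ne: "Y - X *v \<beta> \<noteq> r"
      define m where "m = (1 - 1/2) *\<^sub>R \<beta> + (1/2::real) *\<^sub>R b0"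
      have resm: "Y - X *v m = (1 - 1/2) *\<^sub>R (Y - X *v \<beta>) + (1/2::real) *\<^sub>R r"
      proof -
        have h: "(1/2::real) *\<^sub>R Y + (1/2::real) *\<^sub>R Y = Y"
          by (metis scaleR_add_left field_sum_of_halves scaleR_one)
        have "X *v m = (1/2::real) *\<^sub>R (X *v \<beta>) + (1/2::real) *\<^sub>R (X *v b0)"
          by (simp add: m_def matrix_vector_right_distrib matrix_vector_mult_scaleR)
        then show ?thesis unfolding r_def
          by (simp add: scaleR_diff_right)
      qed
      have "g ((norm (Y - X *v m))\<^sup>2) < (1 - 1/2) * g ((norm (Y - X *v \<beta>))\<^sup>2) + (1/2) * g ((norm r)\<^sup>2)"
        unfolding resm by (rule sc[unfolded strictly_convex_def, rule_format, OF ne]) auto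
      moreover have "P m \<le> (1 - 1/2) * P \<beta> + (1/2) * P b0" unfolding m_def by (rule Pcv) auto
      moreover have "s * P m \<le> s * ((1 - 1/2) * P \<beta> + (1/2) * P b0)"
        using calculation(2) s by (intro mult_left_mono) auto
      ultimately have "obj m < (1 - 1/2) * obj \<beta> + (1/2) * obj b0"
        unfolding obj r_def by (simp add: algebra_simps)
      then have "obj m < obj b0" using bopt by (simp add: field_simps)
      then show False using b0opt[of m] by linarith
    qed
    then show ?thesis by (simp add: s_def)
  qed
  then show ?thesis using s by blast
qed


theorem lemma1:
  fixes \<Omega> :: "'w measure"
    and X :: "real^'p^'n" and \<beta>star :: "real^'p"
    and eps Y :: "'w \<Rightarrow> real^'n"
    and g g' :: "real \<Rightarrow> real"
    and M P :: "'k::finite \<Rightarrow> real^'p^'p"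
    and q c :: "'k \<Rightarrow> real"
  assumes prob: "prob_space \<Omega>"
    and model: "\<forall>\<omega>. Y \<omega> = X *v \<beta>star + eps \<omega>"
    and g_nonneg: "\<forall>x. 0 \<le> g x"
    and g0: "g 0 = 0"
    and g_cont: "continuous_on {0..} g"
    and g_mono: "strict_mono_on {0..} g"
    and g_deriv: "\<forall>x>0. (g has_real_derivative g' x) (at x)"
    and g'_cont: "continuous_on {0<..} g'"
    and g'_pos: "\<forall>x>0. 0 < g' x"
    and g'_antimono: "\<forall>x y. 0 < x \<longrightarrow> x \<le> y \<longrightarrow> g' y \<le> g' x"
    and g_strict_convex: "strictly_convex (\<lambda>\<alpha>::real^'n. g ((norm \<alpha>)\<^sup>2))"
    and kernels: "(\<Inter>j. kernel (M j)) = {0}"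
    and q_ge: "\<forall>j. 1 \<le> q j"
    and P_proj: "\<forall>j. P j ** P j = P j"
    and P_sum: "(\<Sum>j\<in>UNIV. P j ** pinv (M j) ** M j) = mat 1"
    and noise: "AE \<omega> in \<Omega>. Y \<omega> \<noteq> 0 \<and>
       (\<forall>j. 0 < lq_dual_norm (q j) (transpose (X ** P j ** pinv (M j)) *v eps \<omega>))"
    and c_pos: "\<forall>j. 0 < c j"
  shows "AE \<omega> in \<Omega>. \<exists>lam :: 'k \<Rightarrow> real. (\<forall>j. 0 < lam j) \<and>
           (\<forall>\<beta>\<in>estimators g X (Y \<omega>) M q lam. \<forall>j.
              lam j / (2 * g' ((norm (Y \<omega> - X *v \<beta>))\<^sup>2)) =
              c j * lq_dual_norm (q j) (transpose (X ** P j ** pinv (M j)) *v eps \<omega>))"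
  proof -
  show ?thesis using noise
  proof (rule eventually_mono)
    fix \<omega>
    assume h: "Y \<omega> \<noteq> 0 \<and>
       (\<forall>j. 0 < lq_dual_norm (q j) (transpose (X ** P j ** pinv (M j)) *v eps \<omega>))"
    define d where "d j = lq_dual_norm (q j) (transpose (X ** P j ** pinv (M j)) *v eps \<omega>)" for j
    define w where "w j = 2 * c j * d j" for j
    have w: "\<forall>j. 0 < w j" using h c_pos by (simp add: w_def d_def)
    obtain s where s: "s > 0" and sb: "\<forall>\<beta>\<in>estimators g X (Y \<omega>) M q (\<lambda>j. s * w j). g' ((norm (Y \<omega> - X *v \<beta>))\<^sup>2) = s"
      using core[OF q_ge w kernels _ g_deriv g'_pos g_strict_convex] h by blast
    show "\<exists>lam :: 'k \<Rightarrow> real. (\<forall>j. 0 < lam j) \<and>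
           (\<forall>\<beta>\<in>estimators g X (Y \<omega>) M q lam. \<forall>j.
              lam j / (2 * g' ((norm (Y \<omega> - X *v \<beta>))\<^sup>2)) =
              c j * lq_dual_norm (q j) (transpose (X ** P j ** pinv (M j)) *v eps \<omega>))"
    proof (intro exI conjI allI ballI)
      fix j show "0 < s * w j" using s w by simp
    next
      fix \<beta> j assume "\<beta> \<in> estimators g X (Y \<omega>) M q (\<lambda>j. s * w j)"
      then have "g' ((norm (Y \<omega> - X *v \<beta>))\<^sup>2) = s" using sb by blast
      then show "s * w j / (2 * g' ((norm (Y \<omega> - X *v \<beta>))\<^sup>2)) =
              c j * lq_dual_norm (q j) (transpose (X ** P j ** pinv (M j)) *v eps \<omega>)"
        using s by (simp add: w_def d_def)
    qed
  qed
qed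

end
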